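(* Let $M,N\in\mathbb{N}$ and let $\mathbf{M}(M,N)$ be the Motzkin shift. Let $G'$ be the directed graph with one vertex and $M+N+1$ loops named $\lambda_1,\rho_1,\dots,\rho_M,1_1,\dots,1_N$, and let $X_{G'}$ be its edge shift, so that $\mathcal{B}_n(X_{G'})$ is the set of all words of length $n$ over the alphabet $\{\lambda_1,\rho_1,\dots,\rho_M,1_1,\dots,1_N\}$. Then for every $n\geq 1$ there exists a bijection from the set $$\{x\in P_n(\mathbf{M}(M,N)) : \text{the multiplier of } x \text{ is positive, neutral, or equal to } \lambda_1^k \text{ for some } k\geq 1\}$$ onto $\mathcal{B}_n(X_{G'})$.
   Context: Alphabet $\Sigma=\{\lambda_1,\dots,\lambda_M,\rho_1,\dots,\rho_M,1_1,\dots,1_N\}$. $\mathcal{M}(M,N)$ is the monoid with zero generated by $\Sigma$ and an identity $\mathbf{1}$, subject only to the relations $\lambda_i\rho_i=\mathbf{1}$ ($1\le i\le M$), $\lambda_i\rho_j=0$ ($i\neq j$), $1_i\cdot\alpha=\alpha\cdot 1_i=\alpha$ for all $\alpha\in\Sigma\cup\{\mathbf 1\}$ (so $1_i1_j=\mathbf 1$), $\mathbf 1$ is the identity and $0$ is absorbing; no other relations are imposed (e.g. $\rho_i\lambda_j$ does not reduce). The map $\mathit{red}:\Sigma^*\to\mathcal{M}(M,N)$ sends a word $\alpha_1\cdots\alpha_n$ to the product $\alpha_1\cdot\ldots\cdot\alpha_n$ and the empty word to $\mathbf 1$. The Motzkin shift is $\mathbf{M}(M,N)=\{x\in\Sigma^{\mathbb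 Z}:\mathit{red}(x_ix_{i+1}\cdots x_j)\neq 0 \text{ for all } i\le j\}$ with the shift map $\sigma$. For a subshift $X$, $\mathcal B_n(X)$ is the set of words of length $n$ occurring in points of $X$, and $P_n(X)=\{x\in X:\sigma^n x=x\}$; each $x\in P_n(X)$ equals $\alpha^\infty$ for the block $\alpha=x_0\cdots x_{n-1}\in\mathcal B_n(X)$ (its $n$-periodic defining block). Let $\mathcal M^+$ be the (free) submonoid generated by $\rho_1,\dots,\rho_M$ and $\mathcal M^-$ the (free) submonoid generated by $\lambda_1,\dots,\lambda_M$. Every block $\alpha$ can be written $\alpha=\alpha_+\alpha_-$ with $\mathit{red}(\alpha_+)\in\mathcal M^+$ and $\mathit{red}(\alpha_-)\in\mathcal M^-$; the multiplier of $\alpha$ (and of $x=\alpha^\infty$) is $\mathit{red}(\alpha_-\alpha_+)$. It is called positive if it lies in $\mathcal M^+\setminus\{\mathbf 1\}$, negative if it lies in $\mathcal M^-\setminus\{\mathbf 1\}$, and neutral if it equals $\mathbf 1$. *)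

theory Defs
  imports Main
begin

datatype sym = Lam nat | Rho nat | One nat

definition alphabet :: "nat \<Rightarrow> nat \<Rightarrow> sym set" where
  "alphabet M N = {Lam i | i. 1 \<le> i \<and> i \<le> M} \<union> {Rho i | i. 1 \<le> i \<and> i \<le> M}
                  \<union> {One i | i. 1 \<le> i \<and> i \<le> N}"

text \<open>Elements of the monoid M(M,N), represented by their normal forms:
  None is the zero; Some (r, l) is rho_{r!0}...rho_{r!(k-1)} lambda_{l!0}...lambda_{l!(m-1)}.
  Since lambda_i rho_j reduces (to 1 or 0) and nothing else reduces,
  every nonzero element has a unique such normal form.\<close>
type_synonym mval = "(nat list \<times> nat list) option"

fun mm :: "nat list \<Rightarrow> nat list \<Rightarrow> nat list \<Rightarrow> nat list \<Rightarrow> mval" where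
  "mm r1 [] r2 l2 = Some (r1 @ r2, l2)"
| "mm r1 l1 [] l2 = Some (r1, l1 @ l2)"
| "mm r1 l1 (j # r2) l2 = (if last l1 = j then mm r1 (butlast l1) r2 l2 else None)"

fun mmult :: "mval \<Rightarrow> mval \<Rightarrow> mval" where
  "mmult (Some (r1, l1)) (Some (r2, l2)) = mm r1 l1 r2 l2"
| "mmult _ _ = None"

definition munit :: mval where "munit = Some ([], [])"

fun letter :: "sym \<Rightarrow> mval" where
  "letter (Lam i) = Some ([], [i])"
| "letter (Rho i) = Some ([i], [])"
| "letter (One i) = munit"

definition red :: "sym list \<Rightarrow> mval" where
  "red w = foldl (\<lambda>m a. mmult m (letter a)) munit w"

definition motzkin :: "nat \<Rightarrow> nat \<Rightarrow> (int \<Rightarrow> sym) set" where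
  "motzkin M N = {x. (\<forall>i. x i \<in> alphabet M N) \<and> (\<forall>i j. i \<le> j \<longrightarrow> red (map x [i..j]) \<noteq> None)}"

definition per_pts :: "(int \<Rightarrow> sym) set \<Rightarrow> nat \<Rightarrow> (int \<Rightarrow> sym) set" where
  "per_pts X n = {x \<in> X. \<forall>i. x (i + int n) = x i}"

definition block :: "(int \<Rightarrow> sym) \<Rightarrow> nat \<Rightarrow> sym list" where
  "block x n = map (\<lambda>i. x (int i)) [0..<n]"

definition in_Mplus :: "mval \<Rightarrow> bool" where "in_Mplus m \<longleftrightarrow> (\<exists>r. m = Some (r, []))"
definition in_Mminus :: "mval \<Rightarrow> bool" where "in_Mminus m \<longleftrightarrow> (\<exists>l. m = Some ([], l))"

definition multiplier :: "sym list \<Rightarrow> mval" where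
  "multiplier a = (let k = (SOME k. k \<le> length a \<and> in_Mplus (red (take k a)) \<and> in_Mminus (red (drop k a)))
                   in red (drop k a @ take k a))"

definition positive :: "mval \<Rightarrow> bool" where "positive m \<longleftrightarrow> in_Mplus m \<and> m \<noteq> munit"
definition neutral :: "mval \<Rightarrow> bool" where "neutral m \<longleftrightarrow> m = munit"

definition alphabet' :: "nat \<Rightarrow> nat \<Rightarrow> sym set" where
  "alphabet' M N = {Lam 1} \<union> {Rho i | i. 1 \<le> i \<and> i \<le> M} \<union> {One i | i. 1 \<le> i \<and> i \<le> N}"

end

theory Submission
  imports Defs
begin

lemma mm_nilr[simp]: "mm R l [] L = Some (R, l @ L)"
  by (cases l) auto

lemma mm_cons: "l \<noteq> [] \<Longrightarrow> mm R l (j # r) L = (if last l = j then mm R (butlast l) r L else None)"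
  by (cases l) auto

lemma mm_gen: "mm R l r L = (case mm [] l r [] of None \<Rightarrow> None | Some (a, b) \<Rightarrow> Some (R @ a, b @ L))"
proof (induction r arbitrary: l)
  case Nil then show ?case by simp
next
  case (Cons j r)
  show ?case
  proof (cases "l = []")
    case True then show ?thesis by simp
  next
    case False then show ?thesis using Cons by (simp add: mm_cons)
  qed
qed

lemma c_snoc: "mm [] l (r @ [j]) [] = (case mm [] l r [] of None \<Rightarrow> None | Some (a, b) \<Rightarrow> mm a b [j] [])"
proof (induction r arbitrary: l)
  case Nil then show ?case by simp
next
  case (Cons x r)
  show ?case
  proof (cases "l = []")
    case True then show ?thesis by simp
  next
    case False then show ?thesis using Cons by (simp add: mm_cons)
  qed
qed

lemma mm_rho[simp]: "mm r l [j] [] = (if l = [] then Some (r @ [j], []) else if last l = j then Some (r, butlast l) else None)"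
  by (cases l) (auto simp: mm_cons)

lemma mm_shift: "mm (R @ R') l r L = (case mm R' l r L of None \<Rightarrow> None | Some (a, b) \<Rightarrow> Some (R @ a, b))"
  by (subst (1 2) mm_gen) (auto split: option.splits)

lemma c_side: "mm [] l r [] = Some (a, b) \<Longrightarrow> a = [] \<or> b = []"
proof (induction r arbitrary: l)
  case Nil then show ?case by simp
next
  case (Cons x r)
  then show ?case by (cases "l = []") (auto simp: mm_cons split: if_splits)
qed

lemma mmult_None2[simp]: "mmult m None = None"
  by (cases m) auto

lemma mmult_munit_r[simp]: "mmult m munit = m"
  by (cases m) (auto simp: munit_def)

lemma mmult_munit_l[simp]: "mmult munit m = m"
  by (cases m) (auto simp: munit_def)

lemma mmult_pl: "mmult (Some (r1, [])) (Some (r2, l2)) = Some (r1 @ r2, l2)"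
  by simp

lemma mmult_mr: "mmult (Some (r1, l1)) (Some ([], l2)) = Some (r1, l1 @ l2)"
  by simp

lemma assoc_letter: "mmult (mmult m1 m2) (letter a) = mmult m1 (mmult m2 (letter a))"
proof (cases m1)
  case None then show ?thesis by simp
next
  case (Some p1)
  obtain r1 l1 where p1: "m1 = Some (r1, l1)" using Some by (cases p1) auto
  show ?thesis
  proof (cases m2)
    case None then show ?thesis by simp
  next
    case (Some p2)
    obtain r2 l2 where p2: "m2 = Some (r2, l2)" using Some by (cases p2) auto
    show ?thesis
    proof (cases a)
      case (Lam i)
      have "mmult (mm r1 l1 r2 l2) (Some ([], [i])) = mm r1 l1 r2 (l2 @ [i])"
        by (simp add: mm_gen[of r1 l1 r2 l2] mm_gen[of r1 l1 r2 "l2 @ [i]"] split: option.splits)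
      then show ?thesis using p1 p2 Lam by simp
    next
      case (One i)
      then show ?thesis using p1 p2 mmult_munit_r[of "mm r1 l1 r2 l2"] by (simp add: munit_def)
    next
      case (Rho j)
      show ?thesis
      proof (cases "l2 = []")
        case True
        have "mmult (mm r1 l1 r2 []) (Some ([j], [])) = mm r1 l1 (r2 @ [j]) []"
          by (simp add: mm_gen[of r1 l1 r2 "[]"] mm_gen[of r1 l1 "r2 @ [j]" "[]"] c_snoc split: option.splits)
        then show ?thesis using p1 p2 Rho True by simp
      next
        case False
        have "mmult (mm r1 l1 r2 l2) (Some ([j], [])) = mmult (Some (r1, l1)) (mm r2 l2 [j] [])"
          using False
          apply (simp add: mm_cons mm_gen[of r1 l1 r2 l2] mm_gen[of r1 l1 r2 "butlast l2"] split: option.splits)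
          apply (auto simp: mm_cons butlast_append)
          done
        then show ?thesis using p1 p2 Rho by simp
      qed
    qed
  qed
qed

definition stp :: "mval \<Rightarrow> sym \<Rightarrow> mval" where "stp m a = mmult m (letter a)"

lemma red_stp: "red w = foldl stp munit w"
  unfolding red_def stp_def by simp

lemma foldl_stp: "foldl stp (mmult m1 m2) v = mmult m1 (foldl stp m2 v)"
  by (induction v arbitrary: m2) (auto simp: stp_def assoc_letter)

lemma red_append: "red (u @ v) = mmult (red u) (red v)"
proof -
  have "red (u @ v) = foldl stp (mmult (red u) munit) v" by (simp add: red_stp)
  also have "\<dots> = mmult (red u) (red v)" by (simp only: foldl_stp red_stp)
  finally show ?thesis .
qed

lemma red_Nil[simp]: "red [] = munit" by (simp add: red_def)

lemma red_single[simp]: "red [a] = letter a" by (simp add: red_def)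

lemma red_Cons: "red (a # u) = mmult (letter a) (red u)"
  using red_append[of "[a]" u] by simp

lemma red_snoc: "red (u @ [a]) = mmult (red u) (letter a)"
  using red_append[of u "[a]"] by simp

lemma red_app_None: "red (u @ v) \<noteq> None \<Longrightarrow> red u \<noteq> None \<and> red v \<noteq> None"
  by (cases "red u"; cases "red v") (auto simp: red_append)

lemma red_pre: "red (u @ v) = Some x \<Longrightarrow> \<exists>r l. red u = Some (r, l)"
  using red_app_None[of u v] by (cases "red u") auto

lemma red_suf: "red (u @ v) = Some x \<Longrightarrow> \<exists>r l. red v = Some (r, l)"
  using red_app_None[of u v] by (cases "red v") auto

lemma step_Some: "mmult (Some (r, l)) (letter a) = (case a of Lam i \<Rightarrow> Some (r, l @ [i])
   | Rho j \<Rightarrow> (if l = [] then Some (r @ [j], []) else if last l = j then Some (r, butlast l) else None)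
   | One i \<Rightarrow> Some (r, l))"
  by (cases a) (auto simp: munit_def mm_cons)

fun bv :: "sym \<Rightarrow> int" where
  "bv (Lam i) = -1" | "bv (Rho i) = 1" | "bv (One i) = 0"

definition bal :: "sym list \<Rightarrow> int" where "bal w = sum_list (map bv w)"

lemma bal_append[simp]: "bal (u @ v) = bal u + bal v" by (simp add: bal_def)
lemma bal_Nil[simp]: "bal [] = 0" by (simp add: bal_def)
lemma bal_Cons[simp]: "bal (a # u) = bv a + bal u" by (simp add: bal_def)

lemma red_bal: "red u = Some (r, l) \<Longrightarrow> int (length r) - int (length l) = bal u"
proof (induction u arbitrary: r l rule: rev_induct)
  case Nil then show ?case by (simp add: munit_def)
next
  case (snoc a u)
  then obtain r0 l0 where u: "red u = Some (r0, l0)"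
    using red_pre[OF snoc.prems] by blast
  from snoc.prems have e: "mmult (Some (r0, l0)) (letter a) = Some (r, l)" using u by (simp add: red_snoc)
  from snoc.IH[OF u] show ?case using e
    by (cases a) (auto simp: step_Some of_nat_diff Suc_le_eq split: if_splits)
qed

fun collapse :: "sym \<Rightarrow> sym" where
  "collapse (Lam i) = Lam 1" | "collapse (Rho i) = Rho i" | "collapse (One i) = One i"

lemma bv_collapse[simp]: "bv (collapse a) = bv a" by (cases a) auto
lemma bal_collapse[simp]: "bal (map collapse u) = bal u" by (induction u) auto

lemma lin: "map collapse u = map collapse u' \<Longrightarrow> red u = Some (r, l) \<Longrightarrow> red u' = Some (r', l') \<Longrightarrow>
  r = r' \<and> length l = length l' \<and> (l = l' \<longrightarrow> u = u')"
proof (induction u arbitrary: u' r l r' l' rule: rev_induct)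
  case Nil then show ?case by (simp add: munit_def)
next
  case (snoc a u)
  from snoc.prems(1) obtain u0 a' where u': "u' = u0 @ [a']" and cu: "map collapse u = map collapse u0"
    and ca: "collapse a = collapse a'"
    by (cases u' rule: rev_cases) auto
  obtain r0 l0 where u: "red u = Some (r0, l0)"
    using red_pre[OF snoc.prems(2)] by blast
  obtain r0' l0' where u0: "red u0 = Some (r0', l0')"
    using red_pre snoc.prems(3) u' by blast
  have e: "mmult (Some (r0, l0)) (letter a) = Some (r, l)" using snoc.prems(2) u by (simp add: red_snoc)
  have e': "mmult (Some (r0', l0')) (letter a') = Some (r', l')" using snoc.prems(3) u0 u' by (simp add: red_snoc)
  have IH: "r0 = r0' \<and> length l0 = length l0' \<and> (l0 = l0' \<longrightarrow> u = u0)" using snoc.IH[OF cu u u0] .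
  show ?case
  proof (cases a)
    case (Lam i)
    then obtain i' where a': "a' = Lam i'" using ca by (cases a') auto
    show ?thesis using e e' IH Lam a' u' by (auto simp: step_Some)
  next
    case (Rho j)
    then have a': "a' = Rho j" using ca by (cases a') auto
    show ?thesis
    proof (cases "l0 = []")
      case True
      then have "l0' = []" using IH by simp
      then show ?thesis using True e e' IH Rho a' u' by (simp add: step_Some)
    next
      case False
      then have "l0' \<noteq> []" using IH by auto
      note ne = this
      have h1: "last l0 = j" "l = butlast l0" "r = r0" using False e Rho by (auto simp: step_Some split: if_splits)
      have h2: "last l0' = j" "l' = butlast l0'" "r' = r0'" using ne e' a' by (auto simp: step_Some split: if_splits)
      have "l = l' \<Longrightarrow> l0 = l0'"
      proof -
        assume "l = l'"
        then have "butlast l0 @ [last l0] = butlast l0' @ [last l0']" using h1 h2 by simp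
        then show ?thesis using False ne by simp
      qed
      then show ?thesis using h1 h2 IH u' False ne Rho a' by (simp add: length_butlast)
    qed
  next
    case (One j)
    then have a': "a' = One j" using ca by (cases a') auto
    show ?thesis using e e' IH One a' u' by (auto simp: step_Some)
  qed
qed


lemma split2: "map collapse u = map collapse u' \<Longrightarrow> red u = Some (r, l) \<Longrightarrow> red u' = Some (r', l') \<Longrightarrow>
  \<exists>k \<le> length u. red (take k u) = Some (r, []) \<and> red (drop k u) = Some ([], l) \<and>
     red (take k u') = Some (r', []) \<and> red (drop k u') = Some ([], l')"
proof (induction u arbitrary: u' r l r' l' rule: rev_induct)
  case Nil then show ?case by (simp add: munit_def)
next
  case (snoc a u)
  from snoc.prems(1) obtain u0 a' where u': "u' = u0 @ [a']" and cu: "map collapse u = map collapse u0"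
    and ca: "collapse a = collapse a'"
    by (cases u' rule: rev_cases) auto
  have len: "length u0 = length u" using cu by (metis length_map)
  obtain r0 l0 where u: "red u = Some (r0, l0)"
    using red_pre[OF snoc.prems(2)] by blast
  obtain r0' l0' where u0: "red u0 = Some (r0', l0')"
    using red_pre snoc.prems(3) u' by blast
  have e: "mmult (Some (r0, l0)) (letter a) = Some (r, l)" using snoc.prems(2) u by (simp add: red_snoc)
  have e': "mmult (Some (r0', l0')) (letter a') = Some (r', l')" using snoc.prems(3) u0 u' by (simp add: red_snoc)
  have L: "r0 = r0' \<and> length l0 = length l0'" using lin[OF cu u u0] by simp
  obtain k where k: "k \<le> length u" "red (take k u) = Some (r0, [])" "red (drop k u) = Some ([], l0)"
     "red (take k u0) = Some (r0', [])" "red (drop k u0) = Some ([], l0')"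
    using snoc.IH[OF cu u u0] by blast
  have keep: "\<exists>k \<le> length (u @ [a]). red (take k (u @ [a])) = Some (r, []) \<and> red (drop k (u @ [a])) = Some ([], l) \<and>
     red (take k u') = Some (r', []) \<and> red (drop k u') = Some ([], l')"
    if "r = r0" "r' = r0'" "mmult (Some ([], l0)) (letter a) = Some ([], l)"
       "mmult (Some ([], l0')) (letter a') = Some ([], l')"
    using that k u' len by (intro exI[of _ k]) (auto simp: red_snoc)
  show ?case
  proof (cases a)
    case (Lam i)
    then obtain i' where a': "a' = Lam i'" using ca by (cases a') auto
    show ?thesis using e e' Lam a' by (intro keep) (auto simp: step_Some)
  next
    case (Rho j)
    then have a': "a' = Rho j" using ca by (cases a') auto
    show ?thesis
    proof (cases "l0 = []")
      case True
      then have "l0' = []" using L by simp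
      then show ?thesis using True e e' Rho a' u' len snoc.prems(2,3)
        by (intro exI[of _ "Suc (length u)"]) (auto simp: step_Some munit_def)
    next
      case False
      then have "l0' \<noteq> []" using L by auto
      then show ?thesis using False e e' Rho a'
        by (intro keep) (auto simp: step_Some split: if_splits)
    qed
  next
    case (One j)
    then have a': "a' = One j" using ca by (cases a') auto
    show ?thesis using e e' One a' by (intro keep) (auto simp: step_Some)
  qed
qed

lemma mult_eq: assumes "red a = Some (r, l)"
  shows "multiplier a = mmult (Some ([], l)) (Some (r, []))"
proof -
  let ?P = "\<lambda>k. k \<le> length a \<and> in_Mplus (red (take k a)) \<and> in_Mminus (red (drop k a))"
  have "\<exists>k. ?P k" using split2[OF refl assms assms] by (auto simp: in_Mplus_def in_Mminus_def)
  then have P: "?P (SOME k. ?P k)" by (rule someI_ex)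
  define k where "k = (SOME k. ?P k)"
  from P obtain r0 l0 where t: "red (take k a) = Some (r0, [])" and d: "red (drop k a) = Some ([], l0)"
    by (auto simp: in_Mplus_def in_Mminus_def k_def)
  have "red a = Some (r0, l0)" using red_append[of "take k a" "drop k a"] t d by simp
  then have "r0 = r" "l0 = l" using assms by auto
  then show ?thesis unfolding multiplier_def Let_def k_def[symmetric]
    using red_append[of "drop k a" "take k a"] t d by simp
qed


definition Cm :: "mval \<Rightarrow> bool" where
  "Cm m \<longleftrightarrow> (\<exists>a. m = Some (a, [])) \<or> (\<exists>k. m = Some ([], replicate k (1::nat)))"

lemma inj_core:
  assumes c: "map collapse x = map collapse y" and nx: "red x \<noteq> None" and ny: "red y \<noteq> None"
    and cx: "Cm (multiplier x)" and cy: "Cm (multiplier y)"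
  shows "x = y"
proof -
  obtain r l where x: "red x = Some (r, l)" using nx by auto
  obtain r' l' where y: "red y = Some (r', l')" using ny by auto
  obtain k where k: "k \<le> length x" "red (take k x) = Some (r, [])" "red (drop k x) = Some ([], l)"
     "red (take k y) = Some (r', [])" "red (drop k y) = Some ([], l')"
    using split2[OF c x y] by blast
  have len: "length x = length y" using c by (metis length_map)
  have mx: "multiplier x = red (drop k x @ take k x)" using mult_eq[OF x] k by (simp add: red_append)
  have my: "multiplier y = red (drop k y @ take k y)" using mult_eq[OF y] k by (simp add: red_append)
  have cc: "map collapse (drop k x @ take k x) = map collapse (drop k y @ take k y)"
    using c by (simp add: drop_map[symmetric] take_map[symmetric])
  obtain a b where gx: "red (drop k x @ take k x) = Some (a, b)" using cx mx by (auto simp: Cm_def)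
  obtain a' b' where gy: "red (drop k y @ take k y) = Some (a', b')" using cy my by (auto simp: Cm_def)
  note L = lin[OF cc gx gy]
  have "b = b'"
  proof -
    from cx mx gx have bx: "b = [] \<or> (a = [] \<and> (\<exists>p. b = replicate p 1))" by (auto simp: Cm_def)
    from cy my gy have by': "b' = [] \<or> (a' = [] \<and> (\<exists>p. b' = replicate p 1))" by (auto simp: Cm_def)
    show ?thesis using bx by' L by auto
  qed
  then have "drop k x @ take k x = drop k y @ take k y" using L by simp
  then have "drop k x = drop k y" "take k x = take k y" using len by (auto simp: append_eq_append_conv)
  then show ?thesis by (metis append_take_drop_id)
qed

fun gs :: "sym list \<Rightarrow> sym list \<times> nat list" where
  "gs [] = ([], [])"
| "gs (a # W) = (let ys = fst (gs W); S = snd (gs W) in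
     case a of Lam i \<Rightarrow> (case S of [] \<Rightarrow> (Lam 1 # ys, []) | j # S' \<Rightarrow> (Lam j # ys, S'))
     | Rho j \<Rightarrow> (Rho j # ys, j # S) | One i \<Rightarrow> (One i # ys, S))"

lemma gs_len: "length (fst (gs W)) = length W"
  by (induction W) (auto simp: Let_def split: sym.splits list.splits)

lemma gs_col: "map collapse (fst (gs W)) = map collapse W"
  by (induction W) (auto simp: Let_def split: sym.splits list.splits)

lemma gs_alpha: "set W \<subseteq> alphabet' M N \<Longrightarrow> 1 \<le> M \<Longrightarrow>
   set (fst (gs W)) \<subseteq> alphabet M N \<and> (\<forall>j \<in> set (snd (gs W)). 1 \<le> j \<and> j \<le> M)"
proof (induction W)
  case Nil then show ?case by simp
next
  case (Cons a W)
  then have IH: "set (fst (gs W)) \<subseteq> alphabet M N" "\<forall>j \<in> set (snd (gs W)). 1 \<le> j \<and> j \<le> M"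
    and aa: "a \<in> alphabet' M N" by auto
  show ?case
  proof (cases a)
    case (Lam i)
    show ?thesis
    proof (cases "snd (gs W)")
      case Nil
      have "Lam 1 \<in> alphabet M N" using Cons.prems(2) by (auto simp: alphabet_def)
      then show ?thesis using IH Lam Nil by (simp add: Let_def)
    next
      case (Cons j S')
      then have "Lam j \<in> alphabet M N" using IH by (auto simp: alphabet_def)
      then show ?thesis using IH Lam Cons by (simp add: Let_def)
    qed
  next
    case (Rho j)
    then have "Rho j \<in> alphabet M N" "1 \<le> j \<and> j \<le> M" using aa by (auto simp: alphabet_def alphabet'_def)
    then show ?thesis using IH Rho by (simp add: Let_def)
  next
    case (One j)
    then have "One j \<in> alphabet M N" using aa by (auto simp: alphabet_def alphabet'_def)
    then show ?thesis using IH One by (simp add: Let_def)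
  qed
qed

lemma gs_red: "\<exists>m. red (fst (gs W)) = Some (snd (gs W), replicate m 1)"
proof (induction W)
  case Nil then show ?case by (auto simp: munit_def intro: exI[of _ 0])
next
  case (Cons a W)
  then obtain m where m: "red (fst (gs W)) = Some (snd (gs W), replicate m 1)" by blast
  show ?case
  proof (cases a)
    case (Lam i)
    show ?thesis
    proof (cases "snd (gs W)")
      case Nil
      then show ?thesis using m Lam by (auto simp: Let_def red_Cons intro: exI[of _ "Suc m"])
    next
      case (Cons j S')
      then show ?thesis using m Lam by (auto simp: Let_def red_Cons)
    qed
  next
    case (Rho j) then show ?thesis using m by (auto simp: Let_def red_Cons)
  next
    case (One j) then show ?thesis using m by (auto simp: Let_def red_Cons munit_def)
  qed
qed

lemma Mplus_lem: "red u \<noteq> None \<Longrightarrow> (\<forall>t \<le> length u. bal (drop t u) \<ge> 0) \<Longrightarrow> \<exists>R. red u = Some (R, [])"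
proof (induction u)
  case Nil then show ?case by (simp add: munit_def)
next
  case (Cons a u)
  have nu: "red u \<noteq> None" using Cons.prems(1) red_app_None[of "[a]" u] by simp
  have "\<forall>t \<le> length u. bal (drop t u) \<ge> 0"
  proof (intro allI impI)
    fix t assume "t \<le> length u"
    then show "bal (drop t u) \<ge> 0" using Cons.prems(2) by (metis Suc_le_mono drop_Suc_Cons length_Cons)
  qed
  then obtain R where R: "red u = Some (R, [])" using Cons.IH nu by blast
  have bR: "int (length R) = bal u" using red_bal[OF R] by simp
  have b0: "bal (a # u) \<ge> 0" using Cons.prems(2)[rule_format, of 0] by simp
  show ?case
  proof (cases a)
    case (Lam i)
    then have "R \<noteq> []" using bR b0 by auto
    then obtain j R' where "R = j # R'" by (cases R) auto
    then show ?thesis using Cons.prems(1) Lam R by (auto simp: red_Cons split: if_splits)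
  next
    case (Rho j) then show ?thesis using R by (auto simp: red_Cons)
  next
    case (One j) then show ?thesis using R by (auto simp: red_Cons munit_def)
  qed
qed

lemma Mminus_lem: "red u \<noteq> None \<Longrightarrow> (\<forall>t \<le> length u. bal (take t u) \<le> 0) \<Longrightarrow> \<exists>L. red u = Some ([], L)"
proof (induction u rule: rev_induct)
  case Nil then show ?case by (simp add: munit_def)
next
  case (snoc a u)
  have nu: "red u \<noteq> None" using snoc.prems(1) red_app_None by blast
  have "\<forall>t \<le> length u. bal (take t u) \<le> 0"
  proof (intro allI impI)
    fix t assume "t \<le> length u"
    then show "bal (take t u) \<le> 0" using snoc.prems(2)[rule_format, of t] by simp
  qed
  then obtain L where L: "red u = Some ([], L)" using snoc.IH nu by blast
  have bL: "- int (length L) = bal u" using red_bal[OF L] by simp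
  have b0: "bal (u @ [a]) \<le> 0" using snoc.prems(2)[rule_format, of "Suc (length u)"] by simp
  show ?case
  proof (cases a)
    case (Rho j)
    then have "L \<noteq> []" using bL b0 by auto
    then show ?thesis using snoc.prems(1) Rho L by (auto simp: red_snoc split: if_splits)
  next
    case (Lam j) then show ?thesis using L by (auto simp: red_snoc)
  next
    case (One j) then show ?thesis using L by (auto simp: red_snoc munit_def)
  qed
qed


lemma col_id: "set w \<subseteq> alphabet' M N \<Longrightarrow> map collapse w = w"
  by (induction w) (auto simp: alphabet'_def)

lemma col_alpha: "set w \<subseteq> alphabet M N \<Longrightarrow> set (map collapse w) \<subseteq> alphabet' M N"
  by (induction w) (auto simp: alphabet'_def alphabet_def)

lemma argmax: "\<exists>k \<le> (n::nat). \<forall>t \<le> n. (f t :: int) \<le> f k"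
proof -
  let ?S = "f ` {0..n}"
  have "Max ?S \<in> ?S" by (intro Max_in) auto
  then obtain k where k: "k \<in> {0..n}" "Max ?S = f k" by (rule imageE) blast
  have "\<forall>t \<le> n. f t \<le> f k"
  proof (intro allI impI)
    fix t assume "t \<le> n"
    then have "f t \<in> ?S" by auto
    then show "f t \<le> f k" using k(2) Max_ge[of ?S "f t"] by simp
  qed
  then show ?thesis using k by auto
qed

lemma surj_core:
  assumes w: "set w \<subseteq> alphabet' M N" and M: "1 \<le> M"
  shows "\<exists>A1 A2. length (A1 @ A2) = length w \<and> set (A1 @ A2) \<subseteq> alphabet M N \<and> map collapse (A1 @ A2) = w \<and>
     (\<exists>R1. red A1 = Some (R1, [])) \<and> (\<exists>L2. red A2 = Some ([], L2)) \<and> (\<exists>S m. red (A2 @ A1) = Some (S, replicate m 1))"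
proof -
  define n where "n = length w"
  obtain k where k: "k \<le> n" "\<forall>t \<le> n. bal (take t w) \<le> bal (take k w)"
    using argmax[of n "\<lambda>t. bal (take t w)"] by blast
  define W1 where "W1 = take k w"
  define W2 where "W2 = drop k w"
  define v where "v = W2 @ W1"
  define a' where "a' = fst (gs v)"
  define n2 where "n2 = length W2"
  define A2 where "A2 = take n2 a'"
  define A1 where "A1 = drop n2 a'"
  have vset: "set v \<subseteq> alphabet' M N" using w unfolding v_def W1_def W2_def
    by (auto dest: in_set_takeD in_set_dropD)
  have a'eq: "a' = A2 @ A1" unfolding A1_def A2_def by simp
  have cola: "map collapse a' = v" unfolding a'_def using gs_col col_id[OF vset] by simp
  have lenv: "length a' = length v" unfolding a'_def by (simp add: gs_len)
  have c2: "map collapse A2 = W2" unfolding A2_def using cola by (simp add: take_map[symmetric] v_def n2_def)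
  have c1: "map collapse A1 = W1" unfolding A1_def using cola by (simp add: drop_map[symmetric] v_def n2_def)
  obtain S m where rs: "red a' = Some (S, replicate m 1)" using gs_red unfolding a'_def by blast
  have n1: "red A1 \<noteq> None" and n2': "red A2 \<noteq> None" using rs a'eq red_app_None[of A2 A1] by auto
  have "length A1 = length W1" using c1 by (metis length_map)
  then have lA1: "length A1 = k" using k unfolding W1_def n_def by simp
  have "length A2 = length W2" using c2 by (metis length_map)
  then have lA2: "length A2 = n - k" unfolding W2_def n_def by simp
  have "\<exists>R1. red A1 = Some (R1, [])"
  proof (rule Mplus_lem[OF n1], intro allI impI)
    fix t assume t: "t \<le> length A1"
    have "bal (drop t A1) = bal (map collapse (drop t A1))" by simp
    also have "\<dots> = bal (drop t W1)" using c1 by (simp add: drop_map[symmetric])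
    finally have e1: "bal (drop t A1) = bal (drop t W1)" .
    have "take t W1 = take t w" using t lA1 unfolding W1_def by simp
    moreover have "bal W1 = bal (take t W1) + bal (drop t W1)" by (metis append_take_drop_id bal_append)
    ultimately have e2: "bal W1 = bal (take t w) + bal (drop t W1)" by simp
    have "t \<le> n" using t lA1 k by simp
    then have "bal (take t w) \<le> bal W1" using k unfolding W1_def by blast
    then show "bal (drop t A1) \<ge> 0" using e1 e2 by linarith
  qed
  moreover have "\<exists>L2. red A2 = Some ([], L2)"
  proof (rule Mminus_lem[OF n2'], intro allI impI)
    fix t assume t: "t \<le> length A2"
    have "bal (take t A2) = bal (map collapse (take t A2))" by simp
    also have "\<dots> = bal (take t W2)" using c2 by (simp add: take_map[symmetric])
    finally have e1: "bal (take t A2) = bal (take t W2)" .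
    have e2: "bal (take (k + t) w) = bal (take k w) + bal (take t W2)"
      unfolding W2_def by (simp add: take_add)
    have "k + t \<le> n" using t lA2 k by simp
    then have "bal (take (k + t) w) \<le> bal (take k w)" using k by blast
    then show "bal (take t A2) \<le> 0" using e1 e2 by linarith
  qed
  moreover have "set (A1 @ A2) \<subseteq> alphabet M N" using gs_alpha[OF vset M] a'eq unfolding a'_def by auto
  moreover have "map collapse (A1 @ A2) = w" using c1 c2 unfolding W1_def W2_def by simp
  moreover have "length (A1 @ A2) = length w" using lA1 lA2 k unfolding n_def by simp
  ultimately show ?thesis using rs a'eq by blast
qed

definition pw :: "nat \<Rightarrow> sym list \<Rightarrow> sym list" where "pw K b = concat (replicate K b)"

lemma pw_red: assumes "red b = Some (a, c)" "a = [] \<or> c = []" shows "red (pw K b) \<noteq> None"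
proof (cases "c = []")
  case True
  have "\<exists>X. red (pw K b) = Some (X, [])"
    by (induction K) (auto simp: pw_def munit_def red_append assms True)
  then show ?thesis by auto
next
  case False
  then have a: "a = []" using assms by auto
  have "\<exists>Y. red (pw K b) = Some ([], Y)"
    by (induction K) (auto simp: pw_def munit_def red_append assms a)
  then show ?thesis by auto
qed

lemma pw_rot: "pw (Suc K) (v @ u) = v @ pw K (u @ v) @ u"
  by (induction K) (auto simp: pw_def)

lemma pw_nth: "length b = n \<Longrightarrow> m < K * n \<Longrightarrow> pw K b ! m = b ! (m mod n)"
proof (induction K arbitrary: m)
  case 0 then show ?case by simp
next
  case (Suc K)
  have "pw (Suc K) b = b @ pw K b" by (simp add: pw_def)
  then show ?case using Suc by (auto simp: nth_append le_mod_geq not_less)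
qed

lemma pw_len: "length (pw K b) = K * length b"
  by (induction K) (auto simp: pw_def)


lemma per_mod:
  assumes p: "\<forall>i. x (i + int n) = x i" and n: "1 \<le> n"
  shows "x i = x (i mod int n)"
proof -
  have A: "x (a + int n * int q) = x a" for a q
  proof (induction q)
    case 0 then show ?case by simp
  next
    case (Suc q)
    have "x (a + int n * int (Suc q)) = x ((a + int n * int q) + int n)" by (simp add: algebra_simps)
    also have "\<dots> = x (a + int n * int q)" using p by blast
    finally show ?case using Suc by simp
  qed
  have i: "i = i mod int n + int n * (i div int n)" by simp
  show ?thesis
  proof (cases "i div int n \<ge> 0")
    case True
    then have "x (i mod int n + int n * int (nat (i div int n))) = x (i mod int n)" using A by blast
    then show ?thesis using True i by simp
  next
    case False
    then have "x (i + int n * int (nat (- (i div int n)))) = x i" using A by blast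
    moreover have "i + int n * int (nat (- (i div int n))) = i mod int n" using False i
      by (simp add: algebra_simps)
    ultimately show ?thesis by simp
  qed
qed

lemma block_upto: "block x n = map x [0..int n - 1]"
proof (rule nth_equalityI)
  show "length (block x n) = length (map x [0..int n - 1])" by (simp add: block_def)
next
  fix k assume "k < length (block x n)"
  then have "k < n" by (simp add: block_def)
  then show "block x n ! k = map x [0..int n - 1] ! k" by (simp add: block_def)
qed

lemma block_nth: "k < n \<Longrightarrow> block x n ! k = x (int k)"
  by (simp add: block_def)

lemma mod_nat_eq: "(n::nat) \<ge> 1 \<Longrightarrow> nat ((i + int t) mod int n) = (nat (i mod int n) + t) mod n"
proof -
  assume n: "n \<ge> 1"
  have "int ((nat (i mod int n) + t) mod n) = (int (nat (i mod int n)) + int t) mod int n"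
    by (simp add: zmod_int)
  also have "\<dots> = (i mod int n + int t) mod int n" using n by simp
  also have "\<dots> = (i + int t) mod int n" by (simp add: mod_add_left_eq)
  finally show ?thesis by (metis nat_int)
qed

theorem proposition2p1:
  fixes M N n :: nat
  assumes "1 \<le> M" and "1 \<le> n"
  shows "\<exists>f. bij_betw f
           {x \<in> per_pts (motzkin M N) n.
              positive (multiplier (block x n)) \<or> neutral (multiplier (block x n)) \<or>
              (\<exists>k\<ge>1. multiplier (block x n) = Some ([], replicate k 1))}
           {w. length w = n \<and> set w \<subseteq> alphabet' M N}"
proof -
  define A where "A = {x \<in> per_pts (motzkin M N) n.
              positive (multiplier (block x n)) \<or> neutral (multiplier (block x n)) \<or>
              (\<exists>k\<ge>1. multiplier (block x n) = Some ([], replicate k 1))}"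
  define B where "B = {w. length w = n \<and> set w \<subseteq> alphabet' M N}"
  define f where "f = (\<lambda>x. map collapse (block x n))"
  have Aprops: "(\<forall>i. x (i + int n) = x i) \<and> red (block x n) \<noteq> None \<and> Cm (multiplier (block x n))
      \<and> set (block x n) \<subseteq> alphabet M N" if "x \<in> A" for x
  proof -
    from that have xm: "x \<in> motzkin M N" and xp: "\<forall>i. x (i + int n) = x i"
      and c: "positive (multiplier (block x n)) \<or> neutral (multiplier (block x n)) \<or>
              (\<exists>k\<ge>1. multiplier (block x n) = Some ([], replicate k 1))"
      by (auto simp: A_def per_pts_def)
    have "red (map x [0..int n - 1]) \<noteq> None" using xm assms(2) by (auto simp: motzkin_def)
    then have r: "red (block x n) \<noteq> None" by (simp add: block_upto)
    have cm: "Cm (multiplier (block x n))" using c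
      by (auto simp: Cm_def positive_def neutral_def in_Mplus_def munit_def)
    have "set (block x n) \<subseteq> alphabet M N" using xm by (auto simp: block_def motzkin_def)
    then show ?thesis using xp r cm by blast
  qed
  have inj: "inj_on f A"
  proof (rule inj_onI)
    fix x y assume x: "x \<in> A" and y: "y \<in> A" and e: "f x = f y"
    note X = Aprops[OF x] and Y = Aprops[OF y]
    have b: "block x n = block y n" using inj_core[of "block x n" "block y n"] X Y e by (simp add: f_def)
    show "x = y"
    proof
      fix i
      have lt: "nat (i mod int n) < n" using assms(2) by (simp add: nat_less_iff)
      have "x i = x (i mod int n)" using per_mod X assms(2) by blast
      also have "\<dots> = block x n ! nat (i mod int n)" using lt assms(2) by (simp add: block_nth)
      also have "\<dots> = block y n ! nat (i mod int n)" using b by simp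
      also have "\<dots> = y (i mod int n)" using lt assms(2) by (simp add: block_nth)
      also have "\<dots> = y i" using per_mod Y assms(2) by metis
      finally show "x i = y i" .
    qed
  qed
  have sub: "f ` A \<subseteq> B"
  proof
    fix w assume "w \<in> f ` A"
    then obtain x where x: "x \<in> A" and w: "w = f x" by blast
    have "set (map collapse (block x n)) \<subseteq> alphabet' M N" using Aprops[OF x] col_alpha by blast
    moreover have "length (map collapse (block x n)) = n" by (simp add: block_def)
    ultimately show "w \<in> B" using w by (simp add: B_def f_def)
  qed
  have sup: "B \<subseteq> f ` A"
  proof
    fix w assume "w \<in> B"
    then have lw: "length w = n" and sw: "set w \<subseteq> alphabet' M N" by (auto simp: B_def)
    obtain A1 A2 R1 L2 S m where
      l: "length (A1 @ A2) = n" and s: "set (A1 @ A2) \<subseteq> alphabet M N" and c: "map collapse (A1 @ A2) = w"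
      and r1: "red A1 = Some (R1, [])" and r2: "red A2 = Some ([], L2)" and rs: "red (A2 @ A1) = Some (S, replicate m 1)"
      using surj_core[OF sw assms(1)] lw by blast
    define al where "al = A1 @ A2"
    define x where "x = (\<lambda>i. al ! nat (i mod int n))"
    have lt: "nat (i mod int n) < n" for i using assms(2) by (simp add: nat_less_iff)
    have bl: "block x n = al"
    proof (rule nth_equalityI)
      show "length (block x n) = length al" using l by (simp add: block_def al_def)
    next
      fix k assume "k < length (block x n)"
      then have k: "k < n" by (simp add: block_def)
      have "nat (int k mod int n) = k" using k by (simp add: zmod_int)
      then show "block x n ! k = al ! k" using k by (simp add: block_def x_def)
    qed
    have ral: "red al = Some (R1, L2)" using r1 r2 by (simp add: al_def red_append)
    have mul: "multiplier al = Some (S, replicate m 1)"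
      using mult_eq[OF ral] rs r1 r2 by (simp add: red_append)
    have side: "S = [] \<or> replicate m (1::nat) = []"
      using c_side[of L2 R1 S "replicate m 1"] rs r1 r2 by (simp add: red_append)
    have per: "\<forall>i. x (i + int n) = x i" by (simp add: x_def)
    have alph: "\<forall>i. x i \<in> alphabet M N"
    proof
      fix i
      have "x i \<in> set al" unfolding x_def using lt[of i] l unfolding al_def by (intro nth_mem) simp
      then show "x i \<in> alphabet M N" using s by (auto simp: al_def)
    qed
    have powok: "red (pw K al) \<noteq> None" for K
    proof -
      have "red (pw (Suc K) (A2 @ A1)) \<noteq> None" using pw_red[OF rs side] .
      then show ?thesis unfolding pw_rot al_def using red_app_None by metis
    qed
    have fac: "red (map x [i..j]) \<noteq> None" if ij: "i \<le> j" for i j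
    proof -
      define d where "d = nat (j - i + 1)"
      define K where "K = d + n"
      define p where "p = nat (i mod int n)"
      define P where "P = pw K al"
      have lP: "length P = K * n" using l by (simp add: P_def pw_len al_def)
      have pn: "p < n" using lt p_def by simp
      have Kn: "K \<le> K * n" using assms(2) by simp
      have eq: "map x [i..j] = take d (drop p P)"
      proof (rule nth_equalityI)
        have dp: "d + p \<le> K * n" using Kn pn unfolding K_def by linarith
        have "length (map x [i..j]) = d" by (simp add: d_def)
        moreover have "length (take d (drop p P)) = d" using lP dp by simp
        ultimately show "length (map x [i..j]) = length (take d (drop p P))" by simp
      next
        fix t assume "t < length (map x [i..j])"
        then have t: "t < d" by (simp add: d_def)
        then have t2: "i + int t \<le> j" unfolding d_def by linarith
        have pt: "p + t < K * n" using t pn Kn unfolding K_def by linarith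
        have "map x [i..j] ! t = x (i + int t)" using t2 t by (simp add: d_def)
        also have "\<dots> = al ! ((p + t) mod n)" unfolding x_def p_def using mod_nat_eq[OF assms(2)] by simp
        also have "\<dots> = P ! (p + t)" unfolding P_def using pw_nth[of al n "p + t" K] pt l by (simp add: al_def)
        also have "\<dots> = take d (drop p P) ! t" using t pt lP by simp
        finally show "map x [i..j] ! t = take d (drop p P) ! t" .
      qed
      have "red P \<noteq> None" using powok P_def by simp
      then have "red (drop p P) \<noteq> None" using red_app_None[of "take p P" "drop p P"] by simp
      then have "red (take d (drop p P) @ drop d (drop p P)) \<noteq> None" unfolding append_take_drop_id .
      then have "red (take d (drop p P)) \<noteq> None" using red_app_None by blast
      then show ?thesis using eq by simp
    qed
    have xmot: "x \<in> motzkin M N" using alph fac by (auto simp: motzkin_def)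
    have cond: "positive (multiplier (block x n)) \<or> neutral (multiplier (block x n)) \<or>
              (\<exists>k\<ge>1. multiplier (block x n) = Some ([], replicate k 1))"
      using side mul bl
      by (cases m) (auto simp: positive_def neutral_def in_Mplus_def munit_def)
    have "x \<in> A" using xmot per cond by (simp add: A_def per_pts_def)
    moreover have "f x = w" using bl c by (simp add: f_def al_def)
    ultimately show "w \<in> f ` A" by blast
  qed
  have "bij_betw f A B" unfolding bij_betw_def using inj sub sup by blast
  then show ?thesis unfolding A_def B_def by blast
qed

end
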